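(* Let $f\colon D^*\to H^3$ be a regular weakly complete end of a flat front, with hyperbolic Gauss maps $G$ and $G_*$. Then \[\lim_{z\to0}\pi\circ f(z)=(G(0),0)=(G_*(0),0)\] holds if $G(0)\neq\infty$, where $\pi\colon H^3\to\mathbb{R}^3_+$ is the projection to the upper half-space model.
   Context: $H^3=\{uu^*:u\in SL(2,\mathbb{C})\}\subset\mathrm{Herm}(2)$; upper half-space model $\mathbb{R}^3_+=\{(\zeta,h)\in\mathbb{C}\times\mathbb{R}:h>0\}$ with metric $(|d\zeta|^2+dh^2)/h^2$; $\pi(uu^* )=(u_{11}\overline{u_{21}}+u_{12}\overline{u_{22}},1)/(|u_{21}|^2+|u_{22}|^2)$. A flat front on $D^*=\{0<|z|<1\}$ is $f=\mathcal{E}\mathcal{E}^*$ with $\mathcal{E}=(E_{ij})$ a holomorphic immersion from the universal cover of $D^*$ to $SL(2,\mathbb{C})$ with $\mathcal{E}^{-1}d\mathcal{E}=\begin{pmatrix}0&\theta\\ \omega&0\end{pmatrix}$, $\omega,\theta$ holomorphic 1-forms, and $z$ compatible with the metric $ds^2_{1,1}=|\omega|^2+|\theta|^2$. Hyperbolic Gauss maps: $G=E_{11}/E_{21}$, $G_*=E_{12}/E_{22}$. The end is weakly complete if $ds^2_{1,1}$ is complete at $0$, and regular if $G,G_*$ have at most poles at $0$. *)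

theory Defs
  imports "HOL-Complex_Analysis.Complex_Analysis"
begin

text \<open>The universal cover of D* = {0 < |z| < 1} is modelled by the left half-plane
  LH = {w. Re w < 0} with covering map z = exp w; the deck transformation is w + 2 pi i.
  A matrix E = (E11 E12; E21 E22) is represented by its four entry functions on LH.
  The 1-forms omega, theta are written as omega(w) dw, theta(w) dw on LH.\<close>

definition LH :: "complex set" where
  "LH = {w. Re w < 0}"

text \<open>E is a holomorphic immersion LH -> SL(2,C) with E^{-1} dE = (0 theta; omega 0),
  the metric |omega|^2+|theta|^2 is positive definite (so that the coordinate is compatible
  with it), and f = E E^* is single-valued on D* (invariant under the deck transformation).\<close>
definition flat_front_end ::
  "(complex \<Rightarrow> complex) \<Rightarrow> (complex \<Rightarrow> complex) \<Rightarrow> (complex \<Rightarrow> complex) \<Rightarrow> (complex \<Rightarrow> complex)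
   \<Rightarrow> (complex \<Rightarrow> complex) \<Rightarrow> (complex \<Rightarrow> complex) \<Rightarrow> bool" where
  "flat_front_end E11 E12 E21 E22 \<omega> \<theta> \<longleftrightarrow>
     E11 holomorphic_on LH \<and> E12 holomorphic_on LH \<and> E21 holomorphic_on LH \<and> E22 holomorphic_on LH \<and>
     \<omega> holomorphic_on LH \<and> \<theta> holomorphic_on LH \<and>
     (\<forall>w\<in>LH. E11 w * E22 w - E12 w * E21 w = 1) \<and>
     (\<forall>w\<in>LH. (E11 has_field_derivative E12 w * \<omega> w) (at w) \<and>
              (E12 has_field_derivative E11 w * \<theta> w) (at w) \<and>
              (E21 has_field_derivative E22 w * \<omega> w) (at w) \<and>
              (E22 has_field_derivative E21 w * \<theta> w) (at w)) \<and>
     (\<forall>w\<in>LH. \<omega> w \<noteq> 0 \<or> \<theta> w \<noteq> 0) \<and>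
     (\<forall>w\<in>LH.
        let w' = w + 2 * pi * \<i> in
        cmod (E11 w') ^ 2 + cmod (E12 w') ^ 2 = cmod (E11 w) ^ 2 + cmod (E12 w) ^ 2 \<and>
        E11 w' * cnj (E21 w') + E12 w' * cnj (E22 w') = E11 w * cnj (E21 w) + E12 w * cnj (E22 w) \<and>
        cmod (E21 w') ^ 2 + cmod (E22 w') ^ 2 = cmod (E21 w) ^ 2 + cmod (E22 w) ^ 2)"

text \<open>Weak completeness: ds^2_{1,1} = (|omega|^2 + |theta|^2)|dw|^2 is complete at the end,
  i.e. every C^1 curve in LH running into the end (Re w -> -infinity, i.e. z = exp w -> 0)
  has infinite length.\<close>
definition weakly_complete :: "(complex \<Rightarrow> complex) \<Rightarrow> (complex \<Rightarrow> complex) \<Rightarrow> bool" where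
  "weakly_complete \<omega> \<theta> \<longleftrightarrow>
     (\<forall>\<gamma> :: real \<Rightarrow> complex.
        (\<forall>t\<in>{0..<1}. \<gamma> t \<in> LH) \<and> \<gamma> C1_differentiable_on {0..<1} \<and>
        filterlim (\<lambda>t. Re (\<gamma> t)) at_bot (at_left 1) \<longrightarrow>
        \<not> ((\<lambda>t. sqrt (cmod (\<omega> (\<gamma> t)) ^ 2 + cmod (\<theta> (\<gamma> t)) ^ 2) * norm (vector_derivative \<gamma> (at t)))
              integrable_on {0..<1}))"

definition end_filter :: "complex filter" where
  "end_filter = filtercomap exp (at 0)"

text \<open>A hyperbolic Gauss map num/den (values in the Riemann sphere; value infinity where den = 0)
  has at most a pole at 0: either it is identically infinity, or it descends to a function on
  D* which is meromorphic on the whole unit disc (i.e. at worst a pole at 0).\<close>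
definition regular_gauss :: "(complex \<Rightarrow> complex) \<Rightarrow> (complex \<Rightarrow> complex) \<Rightarrow> bool" where
  "regular_gauss num den \<longleftrightarrow>
     (\<forall>w\<in>LH. den w = 0) \<or>
     (\<exists>g. g meromorphic_on ball 0 1 \<and> (\<forall>w\<in>LH. den w \<noteq> 0 \<longrightarrow> g (exp w) = num w / den w))"

definition gauss_value_at_0 :: "(complex \<Rightarrow> complex) \<Rightarrow> (complex \<Rightarrow> complex) \<Rightarrow> complex \<Rightarrow> bool" where
  "gauss_value_at_0 num den a \<longleftrightarrow>
     (\<exists>w\<in>LH. den w \<noteq> 0) \<and> ((\<lambda>w. num w / den w) \<longlongrightarrow> a) end_filter"

text \<open>Projection pi of u u^* to the upper half-space model C x R_+.\<close>
definition proj_uhs :: "complex \<Rightarrow> complex \<Rightarrow> complex \<Rightarrow> complex \<Rightarrow> complex \<times> real" where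
  "proj_uhs u11 u12 u21 u22 =
     ((u11 * cnj u21 + u12 * cnj u22) / complex_of_real (cmod u21 ^ 2 + cmod u22 ^ 2),
      1 / (cmod u21 ^ 2 + cmod u22 ^ 2))"

end

theory Submission
  imports Defs "HOL-Real_Asymp.Real_Asymp"
begin


lemma lemW:
  assumes wc: "weakly_complete \<omega> \<theta>"
    and cw: "continuous_on LH \<omega>" and ct: "continuous_on LH \<theta>"
    and R: "R < 0"
    and bd: "\<And>w. Re w \<le> R \<Longrightarrow> sqrt (cmod (\<omega> w) ^ 2 + cmod (\<theta> w) ^ 2) \<le> M * exp (Re w)"
  shows False
proof -
  define \<gamma> where "\<gamma> = (\<lambda>t::real. complex_of_real (R + ln (1 - t)))"
  define D where "D = (\<lambda>t::real. complex_of_real (- 1 / (1 - t)))"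
  have der: "(\<gamma> has_vector_derivative D t) (at t)" if "t < 1" for t
  proof -
    have "((\<lambda>t. R + ln (1 - t)) has_real_derivative (- 1 / (1 - t))) (at t)"
      using that by (auto intro!: derivative_eq_intros)
    then show ?thesis unfolding \<gamma>_def D_def
      using has_vector_derivative_of_real by blast
  qed
  have vd: "vector_derivative \<gamma> (at t) = D t" if "t < 1" for t
    using der[OF that] vector_derivative_at by blast
  have inLH: "\<gamma> t \<in> LH" if "t \<in> {0..<1}" for t
  proof -
    have "ln (1 - t) \<le> 0" using that by auto
    then show ?thesis using R by (simp add: LH_def \<gamma>_def)
  qed
  have C1: "\<gamma> C1_differentiable_on {0..<1}"
    unfolding C1_differentiable_on_def
  proof (intro exI conjI ballI)
    fix t assume "t \<in> {0..<1::real}"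
    then show "(\<gamma> has_vector_derivative D t) (at t)" using der by auto
  next
    show "continuous_on {0..<1} D" unfolding D_def
      by (intro continuous_intros) auto
  qed
  have lim: "filterlim (\<lambda>t. Re (\<gamma> t)) at_bot (at_left 1)"
    unfolding \<gamma>_def by simp real_asymp
  define f where "f = (\<lambda>t. sqrt (cmod (\<omega> (\<gamma> t)) ^ 2 + cmod (\<theta> (\<gamma> t)) ^ 2) * norm (vector_derivative \<gamma> (at t)))"
  define f' where "f' = (\<lambda>t. sqrt (cmod (\<omega> (\<gamma> t)) ^ 2 + cmod (\<theta> (\<gamma> t)) ^ 2) * norm (D t))"
  have ff': "f t = f' t" if "t \<in> {0..<1}" for t
    using vd that by (auto simp: f_def f'_def)
  have cg: "continuous_on {0..<1} \<gamma>" unfolding \<gamma>_def by (intro continuous_intros) auto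
  have cg1: "continuous_on {0..<1} (\<omega> \<circ> \<gamma>)"
    by (rule continuous_on_compose[OF cg continuous_on_subset[OF cw]]) (use inLH in auto)
  have cg2: "continuous_on {0..<1} (\<theta> \<circ> \<gamma>)"
    by (rule continuous_on_compose[OF cg continuous_on_subset[OF ct]]) (use inLH in auto)
  have cf': "continuous_on {0..<1} f'"
    using cg1 cg2 unfolding f'_def D_def o_def
    by (intro continuous_intros) auto
  have "f' integrable_on {0..<1}"
  proof (rule measurable_bounded_by_integrable_imp_integrable)
    show "f' \<in> borel_measurable (lebesgue_on {0..<1})"
      by (rule continuous_imp_measurable_on_sets_lebesgue[OF cf']) auto
    show "(\<lambda>_. M * exp R) integrable_on {0..<1::real}"
      by (rule integrable_on_const) (intro bounded_set_imp_lmeasurable, auto)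
    show "{0..<1::real} \<in> sets lebesgue" by auto
  next
    fix t :: real assume t: "t \<in> {0..<1}"
    have re: "Re (\<gamma> t) = R + ln (1 - t)" by (simp add: \<gamma>_def)
    have "Re (\<gamma> t) \<le> R" using t re by auto
    then have b: "sqrt (cmod (\<omega> (\<gamma> t)) ^ 2 + cmod (\<theta> (\<gamma> t)) ^ 2) \<le> M * exp (R + ln (1 - t))"
      using bd re by metis
    have e: "exp (R + ln (1 - t)) = exp R * (1 - t)" using t by (simp add: exp_add)
    have nD: "norm (D t) = 1 / (1 - t)" using t unfolding D_def norm_of_real by simp
    have "norm (f' t) = sqrt (cmod (\<omega> (\<gamma> t)) ^ 2 + cmod (\<theta> (\<gamma> t)) ^ 2) * (1 / (1 - t))"
      using nD t by (simp add: f'_def)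
    also have "\<dots> \<le> M * exp R * (1 - t) * (1 / (1 - t))"
      using b e t by (intro mult_right_mono) auto
    also have "\<dots> = M * exp R" using t by auto
    finally show "norm (f' t) \<le> M * exp R" .
  qed
  then have "f integrable_on {0..<1}"
    using ff' integrable_cong by (metis (no_types, lifting))
  then show False
    using wc inLH C1 lim unfolding weakly_complete_def f_def by blast
qed


lemma bound_on_cball:
  fixes f :: "complex \<Rightarrow> complex"
  assumes "continuous_on (cball 0 s) f"
  obtains B where "B > 0" "\<And>z. z \<in> cball 0 s \<Longrightarrow> norm (f z :: complex) \<le> B"
proof -
  have "bounded (f ` cball 0 s)"
    by (rule compact_imp_bounded[OF compact_continuous_image[OF assms compact_cball]])
  then obtain B where B: "B > 0" "\<forall>y\<in>f ` cball 0 s. norm y \<le> B"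
    unfolding bounded_pos by blast
  show ?thesis by (rule that[of B]) (use B in auto)
qed

lemma lemX:
  assumes ff: "flat_front_end E11 E12 E21 E22 \<omega> \<theta>" and wc: "weakly_complete \<omega> \<theta>"
    and r: "0 < r" "r \<le> 1"
    and hg: "g holomorphic_on ball 0 r" and hK: "K holomorphic_on ball 0 r"
    and nz: "\<And>w. Re w < ln r \<Longrightarrow> E21 w \<noteq> 0"
    and gq: "\<And>w. Re w < ln r \<Longrightarrow> g (exp w) = E11 w / E21 w"
    and kq: "\<And>w. Re w < ln r \<Longrightarrow> E21 w * E22 w = K (exp w)"
  shows False
proof -
  define W where "W = {w. Re w < ln r}"
  have oW: "open W" unfolding W_def by (intro open_halfspace_Re_lt)
  have cW: "convex W" unfolding W_def by (rule convex_halfspace_Re_lt)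
  have lnr: "ln r \<le> 0" using r by simp
  have WLH: "w \<in> LH" if "w \<in> W" for w
    using that lnr by (auto simp: W_def LH_def)
  have expW: "exp w \<in> ball 0 r" if "w \<in> W" for w
  proof -
    have "exp (Re w) < exp (ln r)" using that by (simp add: W_def)
    then show ?thesis using r by simp
  qed
  have hol: "E11 holomorphic_on LH" "E12 holomorphic_on LH" "E21 holomorphic_on LH" "E22 holomorphic_on LH"
     "\<omega> holomorphic_on LH" "\<theta> holomorphic_on LH"
    using ff unfolding flat_front_end_def by blast+
  have det: "\<And>w. w \<in> LH \<Longrightarrow> E11 w * E22 w - E12 w * E21 w = 1"
    using ff unfolding flat_front_end_def by blast+
  have D: "\<And>w. w \<in> LH \<Longrightarrow> (E11 has_field_derivative E12 w * \<omega> w) (at w) \<and>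
              (E12 has_field_derivative E11 w * \<theta> w) (at w) \<and>
              (E21 has_field_derivative E22 w * \<omega> w) (at w) \<and>
              (E22 has_field_derivative E21 w * \<theta> w) (at w)"
    using ff unfolding flat_front_end_def by blast+
  have dg: "(g has_field_derivative deriv g z) (at z)" if "z \<in> ball 0 r" for z
    using hg that by (auto intro!: holomorphic_derivI)
  have dK: "(K has_field_derivative deriv K z) (at z)" if "z \<in> ball 0 r" for z
    using hK that by (auto intro!: holomorphic_derivI)
  have F1: "\<omega> w = - deriv g (exp w) * exp w * E21 w ^ 2" if w: "w \<in> W" for w
  proof -
    have lh: "w \<in> LH" using WLH w .
    have n: "E21 w \<noteq> 0" using nz w by (auto simp: W_def)
    have d1: "((\<lambda>w. E11 w / E21 w) has_field_derivative
         ((E12 w * \<omega> w) * E21 w - E11 w * (E22 w * \<omega> w)) / (E21 w * E21 w)) (at w)"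
      using D[OF lh] n by (intro DERIV_divide) auto
    have d2: "((\<lambda>w. g (exp w)) has_field_derivative deriv g (exp w) * exp w) (at w)"
      using DERIV_chain2[OF dg[OF expW[OF w]] DERIV_exp] by simp
    have d2': "((\<lambda>w. E11 w / E21 w) has_field_derivative deriv g (exp w) * exp w) (at w)"
      by (rule has_field_derivative_transform_within_open[OF d2 oW w]) (auto simp: W_def gq)
    have "deriv g (exp w) * exp w = ((E12 w * \<omega> w) * E21 w - E11 w * (E22 w * \<omega> w)) / (E21 w * E21 w)"
      using DERIV_unique[OF d2' d1] .
    also have "\<dots> = - \<omega> w / E21 w ^ 2"
    proof -
      have "(E12 w * \<omega> w) * E21 w - E11 w * (E22 w * \<omega> w) = - \<omega> w * (E11 w * E22 w - E12 w * E21 w)"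
        by (simp add: algebra_simps)
      then show ?thesis using det[OF lh] by (simp add: power2_eq_square)
    qed
    finally show ?thesis using n by (simp add: field_simps)
  qed
  have F2: "E22 w ^ 2 * \<omega> w + E21 w ^ 2 * \<theta> w = deriv K (exp w) * exp w" if w: "w \<in> W" for w
  proof -
    have lh: "w \<in> LH" using WLH w .
    have d1: "((\<lambda>w. E21 w * E22 w) has_field_derivative
         (E22 w * \<omega> w) * E22 w + (E21 w * \<theta> w) * E21 w) (at w)"
      using D[OF lh] by (intro DERIV_mult) auto
    have d2: "((\<lambda>w. K (exp w)) has_field_derivative deriv K (exp w) * exp w) (at w)"
      using DERIV_chain2[OF dK[OF expW[OF w]] DERIV_exp] by simp
    have d2': "((\<lambda>w. E21 w * E22 w) has_field_derivative deriv K (exp w) * exp w) (at w)"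
      by (rule has_field_derivative_transform_within_open[OF d2 oW w]) (auto simp: W_def kq)
    show ?thesis using DERIV_unique[OF d2' d1] by (simp add: power2_eq_square algebra_simps)
  qed
  define \<phi> where "\<phi> = (\<lambda>z. K z * deriv g z)"
  have hphi: "\<phi> holomorphic_on ball 0 r" unfolding \<phi>_def
    using holomorphic_on_mult[OF hK holomorphic_deriv[OF hg open_ball]] by simp
  obtain \<Phi> where P: "\<And>x. x \<in> ball 0 r \<Longrightarrow> (\<Phi> has_field_derivative \<phi> x) (at x within ball 0 r)"
    using holomorphic_convex_primitive'[OF convex_ball open_ball hphi] by blast
  have P': "(\<Phi> has_field_derivative \<phi> x) (at x)" if "x \<in> ball 0 r" for x
    using P[OF that] at_within_open[OF that open_ball] by simp
  define h where "h = (\<lambda>w. E21 w ^ 2 * exp (2 * \<Phi> (exp w)))"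
  have hd: "(h has_field_derivative 0) (at w within W)" if w: "w \<in> W" for w
  proof -
    have lh: "w \<in> LH" using WLH w .
    have dP: "((\<lambda>w. \<Phi> (exp w)) has_field_derivative \<phi> (exp w) * exp w) (at w)"
      using DERIV_chain2[OF P'[OF expW[OF w]] DERIV_exp] by simp
    have "(h has_field_derivative
        (2 * E21 w * (E22 w * \<omega> w)) * exp (2 * \<Phi> (exp w)) + E21 w ^ 2 * (exp (2 * \<Phi> (exp w)) * (2 * (\<phi> (exp w) * exp w)))) (at w)"
      unfolding h_def using D[OF lh] dP
      by (auto intro!: derivative_eq_intros simp: power2_eq_square)
    moreover have "(2 * E21 w * (E22 w * \<omega> w)) * exp (2 * \<Phi> (exp w)) + E21 w ^ 2 * (exp (2 * \<Phi> (exp w)) * (2 * (\<phi> (exp w) * exp w))) = 0"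
    proof -
      have "2 * E21 w * (E22 w * \<omega> w) = 2 * K (exp w) * \<omega> w"
        using kq[of w] w by (simp add: W_def algebra_simps)
      also have "\<dots> = - 2 * K (exp w) * deriv g (exp w) * exp w * E21 w ^ 2"
        using F1[OF w] by simp
      finally have e: "2 * E21 w * (E22 w * \<omega> w) = - 2 * K (exp w) * deriv g (exp w) * exp w * E21 w ^ 2" .
      have "(2 * E21 w * (E22 w * \<omega> w)) * exp (2 * \<Phi> (exp w)) + E21 w ^ 2 * (exp (2 * \<Phi> (exp w)) * (2 * (\<phi> (exp w) * exp w)))
         = exp (2 * \<Phi> (exp w)) * ((2 * E21 w * (E22 w * \<omega> w)) + 2 * K (exp w) * deriv g (exp w) * exp w * E21 w ^ 2)"
        by (simp add: \<phi>_def algebra_simps)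
      also have "\<dots> = 0" unfolding e by simp
      finally show ?thesis .
    qed
    ultimately show ?thesis by (auto intro: has_field_derivative_at_within)
  qed
  obtain c where c: "\<And>w. w \<in> W \<Longrightarrow> h w = c"
    using has_field_derivative_zero_constant[OF cW hd] by blast
  define R where "R = ln (r / 2)"
  have R: "R < 0" "R < ln r" using r by (auto simp: R_def ln_div)
  have w0: "(complex_of_real R) \<in> W" using R by (simp add: W_def)
  have c0: "c \<noteq> 0"
    using c[OF w0] nz[of "complex_of_real R"] R by (auto simp: h_def)
  have expC: "exp w \<in> cball 0 (r/2)" if "Re w \<le> R" for w
  proof -
    have "exp (Re w) \<le> exp R" using that by simp
    then show ?thesis using r by (simp add: R_def)
  qed
  have sub: "cball 0 (r/2) \<subseteq> ball (0::complex) r" using r by auto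
  have contP: "continuous_on (ball 0 r) \<Phi>"
    using P' by (meson DERIV_continuous continuous_at_imp_continuous_on)
  obtain B1 where B1: "B1 > 0" "\<And>z. z \<in> cball 0 (r/2) \<Longrightarrow> norm (deriv g z) \<le> B1"
    using bound_on_cball[of "r/2" "deriv g"]
      holomorphic_on_imp_continuous_on[OF holomorphic_on_subset[OF holomorphic_deriv[OF hg open_ball] sub]] by blast
  obtain B2 where B2: "B2 > 0" "\<And>z. z \<in> cball 0 (r/2) \<Longrightarrow> norm (K z) \<le> B2"
    using bound_on_cball[of "r/2" K]
      holomorphic_on_imp_continuous_on[OF holomorphic_on_subset[OF hK sub]] by blast
  obtain B3 where B3: "B3 > 0" "\<And>z. z \<in> cball 0 (r/2) \<Longrightarrow> norm (deriv K z) \<le> B3"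
    using bound_on_cball[of "r/2" "deriv K"]
      holomorphic_on_imp_continuous_on[OF holomorphic_on_subset[OF holomorphic_deriv[OF hK open_ball] sub]] by blast
  obtain B4 where B4: "B4 > 0" "\<And>z. z \<in> cball 0 (r/2) \<Longrightarrow> norm (\<Phi> z) \<le> B4"
    using bound_on_cball[of "r/2" \<Phi>] continuous_on_subset[OF contP sub] by blast
  define M where "M = B1 * norm c * exp (2 * B4) + (B3 + B2 ^ 2 * B1) / (norm c * exp (- 2 * B4))"
  have bd: "sqrt (cmod (\<omega> w) ^ 2 + cmod (\<theta> w) ^ 2) \<le> M * exp (Re w)" if w: "Re w \<le> R" for w
  proof -
    have wW: "w \<in> W" using w R by (simp add: W_def)
    have ez: "exp w \<in> cball 0 (r/2)" using expC[OF w] .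
    have hw: "E21 w ^ 2 * exp (2 * \<Phi> (exp w)) = c" using c[OF wW] by (simp add: h_def)
    have RePhi: "\<bar>Re (\<Phi> (exp w))\<bar> \<le> B4" using B4(2)[OF ez] abs_Re_le_cmod order_trans by blast
    have nE: "norm (E21 w ^ 2) = norm c / exp (2 * Re (\<Phi> (exp w)))"
    proof -
      have "norm c = norm (E21 w ^ 2) * exp (2 * Re (\<Phi> (exp w)))"
        using hw[symmetric] by (simp add: norm_mult)
      then show ?thesis by (simp add: field_simps)
    qed
    have up: "norm (E21 w ^ 2) \<le> norm c * exp (2 * B4)"
    proof -
      have "exp (- (2 * B4)) \<le> exp (2 * Re (\<Phi> (exp w)))" using RePhi by auto
      then have "1 / exp (2 * Re (\<Phi> (exp w))) \<le> exp (2 * B4)"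
        by (simp add: exp_minus field_simps)
      then show ?thesis using nE by (simp add: divide_inverse mult_left_mono)
    qed
    have lo: "norm c * exp (- 2 * B4) \<le> norm (E21 w ^ 2)"
    proof -
      have "exp (2 * Re (\<Phi> (exp w))) \<le> exp (2 * B4)" using RePhi by auto
      then have "exp (- 2 * B4) \<le> 1 / exp (2 * Re (\<Phi> (exp w)))"
        by (simp add: exp_minus field_simps)
      then show ?thesis using nE by (simp add: divide_inverse mult_left_mono)
    qed
    have pos: "norm c * exp (- 2 * B4) > 0" using c0 by simp
    have nexp: "norm (exp w) = exp (Re w)" by simp
    have o: "norm (\<omega> w) \<le> B1 * norm c * exp (2 * B4) * exp (Re w)"
    proof -
      have "norm (\<omega> w) = norm (deriv g (exp w)) * exp (Re w) * norm (E21 w ^ 2)"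
        using F1[OF wW] by (simp add: norm_mult norm_power)
      also have "\<dots> \<le> B1 * exp (Re w) * (norm c * exp (2 * B4))"
        using B1(1) B1(2)[OF ez] up by (intro mult_mono) auto
      finally show ?thesis by (simp add: algebra_simps)
    qed
    have th: "\<theta> w * E21 w ^ 2 = exp w * (deriv K (exp w) + K (exp w) ^ 2 * deriv g (exp w))"
    proof -
      have "E22 w ^ 2 * \<omega> w = - ((E21 w * E22 w) ^ 2) * deriv g (exp w) * exp w"
        using F1[OF wW] by (simp add: power2_eq_square algebra_simps)
      then have "E22 w ^ 2 * \<omega> w = - (K (exp w) ^ 2) * deriv g (exp w) * exp w"
        using kq[of w] wW by (simp add: W_def)
      then show ?thesis using F2[OF wW] by (simp add: algebra_simps)
    qed
    have t: "norm (\<theta> w) \<le> (B3 + B2 ^ 2 * B1) / (norm c * exp (- 2 * B4)) * exp (Re w)"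
    proof -
      have "norm (\<theta> w) * norm (E21 w ^ 2) = exp (Re w) * norm (deriv K (exp w) + K (exp w) ^ 2 * deriv g (exp w))"
        using arg_cong[OF th, of norm] by (simp add: norm_mult)
      also have "\<dots> \<le> exp (Re w) * (B3 + B2 ^ 2 * B1)"
      proof -
        have "norm (deriv K (exp w) + K (exp w) ^ 2 * deriv g (exp w)) \<le> norm (deriv K (exp w)) + norm (K (exp w)) ^ 2 * norm (deriv g (exp w))"
          by (metis norm_mult norm_power norm_triangle_ineq)
        also have "\<dots> \<le> B3 + B2 ^ 2 * B1"
          using B1(2)[OF ez] B2(2)[OF ez] B3(2)[OF ez]
          by (intro add_mono mult_mono power_mono) auto
        finally show ?thesis by (intro mult_left_mono) auto
      qed
      finally have a: "norm (\<theta> w) * norm (E21 w ^ 2) \<le> exp (Re w) * (B3 + B2 ^ 2 * B1)" .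
      have "norm (\<theta> w) * (norm c * exp (- 2 * B4)) \<le> norm (\<theta> w) * norm (E21 w ^ 2)"
        using lo by (intro mult_left_mono) auto
      with a have "norm (\<theta> w) * (norm c * exp (- 2 * B4)) \<le> exp (Re w) * (B3 + B2 ^ 2 * B1)" by linarith
      then show ?thesis using pos by (simp add: field_simps)
    qed
    have "sqrt (cmod (\<omega> w) ^ 2 + cmod (\<theta> w) ^ 2) \<le> cmod (\<omega> w) + cmod (\<theta> w)"
      by (rule real_le_lsqrt) (auto simp: power2_eq_square algebra_simps)
    also have "\<dots> \<le> M * exp (Re w)" using o t by (simp add: M_def algebra_simps)
    finally show ?thesis .
  qed
  have cont: "continuous_on LH \<omega>" "continuous_on LH \<theta>"
    using hol by (auto intro: holomorphic_on_imp_continuous_on)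
  show False using lemW[OF wc cont R(1) bd] .
qed


lemma eventually_end_filter:
  "eventually P end_filter \<longleftrightarrow> (\<exists>R. \<forall>w. Re w < R \<longrightarrow> P w)"
proof
  assume "eventually P end_filter"
  then obtain Q where Q: "eventually Q (at (0::complex))" "\<And>x. Q (exp x) \<Longrightarrow> P x"
    unfolding end_filter_def eventually_filtercomap by blast
  then obtain d where d: "d > 0" "\<And>x. x \<noteq> 0 \<Longrightarrow> dist x 0 < d \<Longrightarrow> Q x"
    unfolding eventually_at by blast
  show "\<exists>R. \<forall>w. Re w < R \<longrightarrow> P w"
  proof (intro exI allI impI)
    fix w assume "Re w < ln d"
    then have "exp (Re w) < exp (ln d)" by simp
    then have "dist (exp w) 0 < d" using d by simp
    then show "P w" using d Q by simp
  qed
next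
  assume "\<exists>R. \<forall>w. Re w < R \<longrightarrow> P w"
  then obtain R where R: "\<And>w. Re w < R \<Longrightarrow> P w" by blast
  have lz: "ln (norm z) < R" if "z \<noteq> 0" "dist z 0 < exp R" for z :: complex
  proof -
    have "norm z < exp R" "norm z > 0" using that by auto
    then show ?thesis using ln_less_cancel_iff[of "norm z" "exp R"] by simp
  qed
  have "eventually (\<lambda>z. ln (norm z) < R) (at (0::complex))"
    unfolding eventually_at using lz by (intro exI[of _ "exp R"]) auto
  moreover have "P w" if "ln (norm (exp w)) < R" for w using that R by simp
  ultimately show "eventually P end_filter"
    unfolding end_filter_def eventually_filtercomap by blast
qed

lemma LH_props: "open LH" "connected LH"
  unfolding LH_def by (auto intro: open_halfspace_Re_lt convex_connected convex_halfspace_Re_lt)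

lemma nonzero_near_end:
  assumes "h holomorphic_on LH" "\<exists>w\<in>LH. h w \<noteq> 0"
  shows "\<exists>w. Re w < R \<and> h w \<noteq> 0"
proof (rule ccontr)
  assume "\<not> ?thesis"
  then have z: "\<And>w. Re w < R \<Longrightarrow> h w = 0" by blast
  define R' where "R' = min R (-1)"
  define U where "U = {w. Re w < R'}"
  have UL: "U \<subseteq> LH" by (auto simp: U_def LH_def R'_def)
  have xi: "complex_of_real (R' - 1) \<in> U" by (simp add: U_def)
  have "complex_of_real (R' - 1) islimpt U"
    using xi by (intro interior_limit_point) (auto simp: U_def interior_open open_halfspace_Re_lt)
  moreover have "\<And>w. w \<in> U \<Longrightarrow> h w = 0" using z by (auto simp: U_def R'_def)
  ultimately have "\<And>w. w \<in> LH \<Longrightarrow> h w = 0"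
    using analytic_continuation[OF assms(1) LH_props UL] xi UL by blast
  then show False using assms(2) by blast
qed

lemma nonzero_region:
  assumes hn: "num holomorphic_on LH" and hd: "den holomorphic_on LH"
    and nd: "\<And>w. w \<in> LH \<Longrightarrow> num w \<noteq> 0 \<or> den w \<noteq> 0"
    and ex: "\<exists>w\<in>LH. den w \<noteq> 0"
    and S: "open S" and q: "continuous_on S q"
    and W: "open W" "W \<subseteq> LH" and WS: "\<And>w. w \<in> W \<Longrightarrow> exp w \<in> S"
    and eq: "\<And>w. w \<in> W \<Longrightarrow> den w \<noteq> 0 \<Longrightarrow> q (exp w) = num w / den w"
    and w0: "w0 \<in> W"
  shows "den w0 \<noteq> 0"
proof
  assume d0: "den w0 = 0"
  have l0: "w0 \<in> LH" using W w0 by blast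
  obtain b where b: "b \<in> LH" "den b \<noteq> 0" using ex by blast
  obtain r where r: "r > 0" "ball w0 r \<subseteq> LH" "\<And>z. z \<in> ball w0 r - {w0} \<Longrightarrow> den z \<noteq> 0"
  proof (rule isolated_zeros[OF hd LH_props l0 d0 b])
    fix r assume "0 < r" "ball w0 r \<subseteq> LH" "\<And>z. z \<in> ball w0 r - {w0} \<Longrightarrow> den z \<noteq> 0"
    then show thesis by (rule that)
  qed
  have ev: "eventually (\<lambda>z. z \<in> ball w0 r - {w0} \<and> z \<in> W) (at w0)"
  proof -
    have "eventually (\<lambda>z. z \<in> ball w0 r \<inter> W) (nhds w0)"
      by (rule eventually_nhds_in_open) (use W(1) r(1) w0 in auto)
    then show ?thesis unfolding eventually_at_filter
      by (rule eventually_mono) auto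
  qed
  have ev2: "eventually (\<lambda>z. num z = q (exp z) * den z) (at w0)"
    by (rule eventually_mono[OF ev]) (use r(3) eq in auto)
  have cn: "isCont num w0"
    using continuous_on_eq_continuous_at[OF LH_props(1)] holomorphic_on_imp_continuous_on[OF hn] l0 by blast
  have cd: "isCont den w0"
    using continuous_on_eq_continuous_at[OF LH_props(1)] holomorphic_on_imp_continuous_on[OF hd] l0 by blast
  have cq: "isCont q (exp w0)"
    using continuous_on_eq_continuous_at[OF S] q WS[OF w0] by blast
  have cqe: "isCont (\<lambda>z. q (exp z)) w0"
  proof -
    have "isCont exp w0" by (rule isCont_exp)
    then show ?thesis using continuous_at_compose[of w0 exp q] cq by (simp add: o_def)
  qed
  have t1: "(num \<longlongrightarrow> num w0) (at w0)" using cn by (simp add: isCont_def)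
  have t2: "((\<lambda>z. q (exp z) * den z) \<longlongrightarrow> q (exp w0) * den w0) (at w0)"
    using cqe cd by (intro tendsto_mult) (auto simp: isCont_def)
  have t1': "((\<lambda>z. q (exp z) * den z) \<longlongrightarrow> num w0) (at w0)"
    using t1 ev2 by (rule Lim_transform_eventually)
  have "num w0 = q (exp w0) * den w0"
    using tendsto_unique[OF at_neq_bot t1' t2] .
  then have "num w0 = 0" using d0 by simp
  then show False using nd[OF l0] d0 by simp
qed

lemma proj_fst_bound:
  fixes u11 u12 u21 u22 a :: complex
  assumes "u21 \<noteq> 0" "u22 \<noteq> 0"
  shows "norm ((u11 * cnj u21 + u12 * cnj u22) / complex_of_real (cmod u21 ^ 2 + cmod u22 ^ 2) - a)
         \<le> norm (u11 / u21 - a) + norm (u12 / u22 - a)"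
proof -
  define N where "N = cmod u21 ^ 2 + cmod u22 ^ 2"
  have Np: "N > 0" using assms by (simp add: N_def add_pos_pos)
  have s1: "complex_of_real (cmod u21 ^ 2) = u21 * cnj u21"
    using complex_norm_square[of u21] by simp
  have s2: "complex_of_real (cmod u22 ^ 2) = u22 * cnj u22"
    using complex_norm_square[of u22] by simp
  have e1: "u11 * cnj u21 = (u11 / u21) * complex_of_real (cmod u21 ^ 2)"
    using assms(1) unfolding s1 by (simp add: field_simps)
  have e2: "u12 * cnj u22 = (u12 / u22) * complex_of_real (cmod u22 ^ 2)"
    using assms(2) unfolding s2 by (simp add: field_simps)
  have "(u11 * cnj u21 + u12 * cnj u22) - a * complex_of_real N
      = (u11 / u21 - a) * complex_of_real (cmod u21 ^ 2) + (u12 / u22 - a) * complex_of_real (cmod u22 ^ 2)"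
    unfolding e1 e2 N_def by (simp add: algebra_simps)
  then have "norm ((u11 * cnj u21 + u12 * cnj u22) - a * complex_of_real N)
      = norm ((u11 / u21 - a) * complex_of_real (cmod u21 ^ 2) + (u12 / u22 - a) * complex_of_real (cmod u22 ^ 2))"
    by simp
  also have "\<dots> \<le> norm ((u11 / u21 - a) * complex_of_real (cmod u21 ^ 2)) + norm ((u12 / u22 - a) * complex_of_real (cmod u22 ^ 2))"
    by (rule norm_triangle_ineq)
  also have "\<dots> = norm (u11 / u21 - a) * cmod u21 ^ 2 + norm (u12 / u22 - a) * cmod u22 ^ 2"
    by (simp add: norm_mult norm_power)
  also have "\<dots> \<le> (norm (u11 / u21 - a) + norm (u12 / u22 - a)) * N"
    unfolding N_def by (simp add: algebra_simps add_mono mult_left_mono)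
  finally have b: "norm ((u11 * cnj u21 + u12 * cnj u22) - a * complex_of_real N) \<le> (norm (u11 / u21 - a) + norm (u12 / u22 - a)) * N" .
  have "(u11 * cnj u21 + u12 * cnj u22) / complex_of_real N - a = ((u11 * cnj u21 + u12 * cnj u22) - a * complex_of_real N) / complex_of_real N"
    using Np by (simp add: field_simps)
  then have "norm ((u11 * cnj u21 + u12 * cnj u22) / complex_of_real N - a) = norm ((u11 * cnj u21 + u12 * cnj u22) - a * complex_of_real N) / N"
    using Np by (simp add: norm_divide)
  also have "\<dots> \<le> norm (u11 / u21 - a) + norm (u12 / u22 - a)"
    using b Np by (simp add: divide_le_eq)
  finally show ?thesis by (simp add: N_def)
qed

lemma proj_snd_bound:
  fixes u11 u12 u21 u22 a :: complex
  assumes "u21 \<noteq> 0" "u22 \<noteq> 0" "u11 * u22 - u12 * u21 = 1"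
  shows "1 / (cmod u21 ^ 2 + cmod u22 ^ 2) \<le> norm (u11 / u21 - a) + norm (u12 / u22 - a)"
proof -
  define N where "N = cmod u21 ^ 2 + cmod u22 ^ 2"
  define X where "X = (u11 / u21 - a) - (u12 / u22 - a)"
  have Np: "N > 0" using assms by (simp add: N_def add_pos_pos)
  have k: "u21 * u22 * X = u11 * u22 - u12 * u21"
    using assms(1,2) unfolding X_def by (simp add: field_simps)
  have "1 = cmod u21 * cmod u22 * norm X"
    using arg_cong[OF k, of norm] assms(3) by (simp add: norm_mult)
  also have "\<dots> \<le> cmod u21 * cmod u22 * (norm (u11 / u21 - a) + norm (u12 / u22 - a))"
    unfolding X_def by (intro mult_left_mono norm_triangle_ineq4) auto
  also have "\<dots> \<le> N * (norm (u11 / u21 - a) + norm (u12 / u22 - a))"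
  proof (intro mult_right_mono)
    define x where "x = cmod u21"
    define y where "y = cmod u22"
    have "0 \<le> (x - y) ^ 2" by simp
    then have "2 * (x * y) \<le> x ^ 2 + y ^ 2" by (simp add: power2_eq_square algebra_simps)
    moreover have "0 \<le> x * y" by (simp add: x_def y_def)
    ultimately show "cmod u21 * cmod u22 \<le> N" unfolding N_def x_def[symmetric] y_def[symmetric] by linarith
  qed auto
  finally have "1 \<le> N * (norm (u11 / u21 - a) + norm (u12 / u22 - a))" .
  then show ?thesis using Np by (simp add: N_def[symmetric] divide_le_eq mult.commute)
qed



lemma mero_at0:
  assumes "g meromorphic_on ball 0 1"
  obtains r where "0 < r" "r \<le> 1" "g holomorphic_on ball 0 r - {0}" "not_essential g 0"
proof -
  have m: "g meromorphic_on {0}" by (rule meromorphic_on_subset[OF assms]) auto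
  obtain r where r: "r > 0" "g analytic_on ball 0 r - {0}"
    using meromorphic_on_isolated_singularity[OF m] unfolding isolated_singularity_at_def by blast
  have "g holomorphic_on ball 0 r - {0}" using analytic_imp_holomorphic[OF r(2)] .
  then have "g holomorphic_on ball 0 (min r 1) - {0}"
    by (rule holomorphic_on_subset) auto
  then show thesis using that[of "min r 1"] r(1) meromorphic_on_not_essential[OF m] by auto
qed

lemma end_filter_exp: "filterlim exp (at 0) end_filter"
  unfolding end_filter_def by (rule filterlim_filtercomap)

lemma glim:
  assumes ne: "not_essential g 0"
    and gq: "\<And>w. w \<in> LH \<Longrightarrow> den w \<noteq> 0 \<Longrightarrow> g (exp w) = num w / den w"
    and hd: "den holomorphic_on LH" and ex: "\<exists>w\<in>LH. den w \<noteq> 0"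
    and lim: "((\<lambda>w. num w / den w) \<longlongrightarrow> a) end_filter"
  shows "(g \<longlongrightarrow> a) (at 0)"
proof -
  define F where "F = inf end_filter (principal {w. den w \<noteq> 0 \<and> w \<in> LH})"
  have Fnb: "F \<noteq> bot"
  proof
    assume "F = bot"
    then have "eventually (\<lambda>_. False) F" by simp
    then have "eventually (\<lambda>w. w \<in> {w. den w \<noteq> 0 \<and> w \<in> LH} \<longrightarrow> False) end_filter"
      unfolding F_def eventually_inf_principal .
    then obtain R where R: "\<And>w. Re w < R \<Longrightarrow> \<not> (den w \<noteq> 0 \<and> w \<in> LH)"
      unfolding eventually_end_filter by auto
    obtain w where w: "Re w < min R 0" "den w \<noteq> 0"
      using nonzero_near_end[OF hd ex] by blast
    have "w \<in> LH" using w by (simp add: LH_def)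
    then show False using R[of w] w by simp
  qed
  have t0: "((\<lambda>w. num w / den w) \<longlongrightarrow> a) F"
    using lim unfolding F_def by (rule tendsto_mono[rotated]) simp
  have evF: "eventually (\<lambda>w. num w / den w = g (exp w)) F"
    unfolding F_def eventually_inf_principal using gq by simp
  have t1: "((\<lambda>w. g (exp w)) \<longlongrightarrow> a) F"
    by (rule Lim_transform_eventually[OF t0 evF])
  have eF: "filterlim exp (at 0) F"
    by (rule filterlim_mono[OF end_filter_exp order_refl]) (simp add: F_def)
  from ne obtain L where L: "(g \<longlongrightarrow> L) (at 0) \<or> is_pole g 0"
    unfolding not_essential_def by blast
  then show ?thesis
  proof
    assume gL: "(g \<longlongrightarrow> L) (at 0)"
    have "((\<lambda>w. g (exp w)) \<longlongrightarrow> L) F"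
      using filterlim_compose[OF gL eF] .
    then have "L = a" using tendsto_unique[OF Fnb _ t1] by blast
    then show ?thesis using gL by simp
  next
    assume "is_pole g 0"
    then have "filterlim g at_infinity (at 0)" by (simp add: is_pole_def)
    then have "filterlim (\<lambda>w. g (exp w)) at_infinity F"
      using filterlim_compose[OF _ eF] by blast
    then show ?thesis using not_tendsto_and_filterlim_at_infinity[OF Fnb t1] by blast
  qed
qed

theorem proposition1p11:
  fixes E11 E12 E21 E22 \<omega> \<theta> :: "complex \<Rightarrow> complex" and a :: complex
  assumes "flat_front_end E11 E12 E21 E22 \<omega> \<theta>"
    and "weakly_complete \<omega> \<theta>"
    and "regular_gauss E11 E21" and "regular_gauss E12 E22"
    and "gauss_value_at_0 E11 E21 a"
  shows "((\<lambda>w. proj_uhs (E11 w) (E12 w) (E21 w) (E22 w)) \<longlongrightarrow> (a, 0)) end_filter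
         \<and> gauss_value_at_0 E12 E22 a"
proof -
  note ff = assms(1)
  have hol: "E11 holomorphic_on LH" "E12 holomorphic_on LH" "E21 holomorphic_on LH" "E22 holomorphic_on LH"
    using ff unfolding flat_front_end_def by blast+
  have det: "\<And>w. w \<in> LH \<Longrightarrow> E11 w * E22 w - E12 w * E21 w = 1"
    using ff unfolding flat_front_end_def by blast
  have nd1: "E11 w \<noteq> 0 \<or> E21 w \<noteq> 0" if "w \<in> LH" for w using det[OF that] by auto
  have nd2: "E12 w \<noteq> 0 \<or> E22 w \<noteq> 0" if "w \<in> LH" for w using det[OF that] by auto
  have ex1: "\<exists>w\<in>LH. E21 w \<noteq> 0" and lim1: "((\<lambda>w. E11 w / E21 w) \<longlongrightarrow> a) end_filter"
    using assms(5) unfolding gauss_value_at_0_def by blast+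
  obtain g where g: "g meromorphic_on ball 0 1"
    and gq: "\<And>w. w \<in> LH \<Longrightarrow> E21 w \<noteq> 0 \<Longrightarrow> g (exp w) = E11 w / E21 w"
    using assms(3) ex1 unfolding regular_gauss_def by blast
  obtain r0 where r0: "0 < r0" "r0 \<le> 1" "g holomorphic_on ball 0 r0 - {0}" "not_essential g 0"
    using mero_at0[OF g] by blast
  have ga: "(g \<longlongrightarrow> a) (at 0)"
    by (rule glim[OF r0(4) gq hol(3) ex1 lim1])
  define gh where "gh = (\<lambda>y. if y = 0 then a else g y)"
  have hgh: "gh holomorphic_on ball 0 r0"
    unfolding gh_def by (rule removable_singularity[OF r0(3) open_ball ga])
  have ghq: "gh (exp w) = g (exp w)" for w by (simp add: gh_def)
  have expball: "exp w \<in> ball 0 r" if "0 < r" "Re w < ln r" for r w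
  proof -
    have "exp (Re w) < exp (ln r)" using that(2) by (simp only: exp_less_cancel_iff)
    then show ?thesis using that by simp
  qed
  have ltLH: "w \<in> LH" if "0 < r" "r \<le> 1" "Re w < ln r" for r w
  proof -
    have "ln r \<le> 0" using that by simp
    then have "Re w < 0" using that(3) by linarith
    then show ?thesis by (simp add: LH_def)
  qed
  have nz1: "E21 w \<noteq> 0" if "Re w < ln r0" for w
  proof (rule nonzero_region[OF hol(1) hol(3) nd1 ex1 open_ball holomorphic_on_imp_continuous_on[OF hgh]])
    show "open {w. Re w < ln r0}" by (rule open_halfspace_Re_lt)
    show "{w. Re w < ln r0} \<subseteq> LH" using ltLH r0 by blast
    show "\<And>w. w \<in> {w. Re w < ln r0} \<Longrightarrow> exp w \<in> ball 0 r0" using expball r0 by blast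
    show "\<And>w. w \<in> {w. Re w < ln r0} \<Longrightarrow> E21 w \<noteq> 0 \<Longrightarrow> gh (exp w) = E11 w / E21 w"
      using ghq gq ltLH r0 by auto
    show "w \<in> {w. Re w < ln r0}" using that by simp
  qed
  have E22ex: "\<exists>w\<in>LH. E22 w \<noteq> 0"
  proof (rule ccontr)
    assume "\<not> ?thesis"
    then have z: "\<And>w. w \<in> LH \<Longrightarrow> E22 w = 0" by blast
    show False
    proof (rule lemX[OF ff assms(2) r0(1) r0(2) hgh, of "\<lambda>_. 0"])
      show "(\<lambda>_. 0) holomorphic_on ball 0 r0" by simp
      show "\<And>w. Re w < ln r0 \<Longrightarrow> E21 w \<noteq> 0" by (rule nz1)
      show "\<And>w. Re w < ln r0 \<Longrightarrow> gh (exp w) = E11 w / E21 w"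
        using ghq gq ltLH r0 nz1 by auto
      show "\<And>w. Re w < ln r0 \<Longrightarrow> E21 w * E22 w = 0"
        using z ltLH r0 by auto
    qed
  qed
  obtain gs where gs: "gs meromorphic_on ball 0 1"
    and gsq: "\<And>w. w \<in> LH \<Longrightarrow> E22 w \<noteq> 0 \<Longrightarrow> gs (exp w) = E12 w / E22 w"
    using assms(4) E22ex unfolding regular_gauss_def by blast
  obtain r1 where r1: "0 < r1" "r1 \<le> 1" "gs holomorphic_on ball 0 r1 - {0}" "not_essential gs 0"
    using mero_at0[OF gs] by blast
  have nz2: "E22 w \<noteq> 0" if "Re w < ln r1" for w
  proof (rule nonzero_region[OF hol(2) hol(4) nd2 E22ex _ holomorphic_on_imp_continuous_on[OF r1(3)]])
    show "open (ball 0 r1 - {0::complex})" by (intro open_Diff) auto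
    show "open {w. Re w < ln r1}" by (rule open_halfspace_Re_lt)
    show "{w. Re w < ln r1} \<subseteq> LH" using ltLH r1 by blast
    show "\<And>w. w \<in> {w. Re w < ln r1} \<Longrightarrow> exp w \<in> ball 0 r1 - {0}" using expball r1 by simp
    show "\<And>w. w \<in> {w. Re w < ln r1} \<Longrightarrow> E22 w \<noteq> 0 \<Longrightarrow> gs (exp w) = E12 w / E22 w"
      using gsq ltLH r1 by auto
    show "w \<in> {w. Re w < ln r1}" using that by simp
  qed
  have gsa: "(gs \<longlongrightarrow> a) (at 0)"
  proof (rule ccontr)
    assume na: "\<not> (gs \<longlongrightarrow> a) (at 0)"
    define Dz where "Dz = (\<lambda>z. gs z + - g z)"
    obtain c where c: "((\<lambda>z. - inverse (Dz z)) \<longlongrightarrow> c) (at 0)"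
      and evD: "eventually (\<lambda>z. Dz z \<noteq> 0) (at 0)"
    proof -
      from r1(4) obtain L where L: "(gs \<longlongrightarrow> L) (at 0) \<or> is_pole gs 0"
        unfolding not_essential_def by blast
      then show thesis
      proof
        assume gL: "(gs \<longlongrightarrow> L) (at 0)"
        then have La: "L \<noteq> a" using na by auto
        have tD: "(Dz \<longlongrightarrow> L + - a) (at 0)"
          unfolding Dz_def by (intro tendsto_add tendsto_minus gL ga)
        have nz: "L + - a \<noteq> 0" using La by simp
        show thesis
        proof (rule that)
          show "((\<lambda>z. - inverse (Dz z)) \<longlongrightarrow> - inverse (L + - a)) (at 0)"
            by (intro tendsto_minus tendsto_inverse tD nz)
          show "eventually (\<lambda>z. Dz z \<noteq> 0) (at 0)"
            by (rule tendsto_imp_eventually_ne[OF tD nz])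
        qed
      next
        assume "is_pole gs 0"
        then have p: "filterlim gs at_infinity (at 0)" by (simp add: is_pole_def)
        have fD: "filterlim Dz at_infinity (at 0)"
          unfolding Dz_def by (rule tendsto_add_filterlim_at_infinity'[OF p tendsto_minus[OF ga]])
        show thesis
        proof (rule that)
          have "((\<lambda>z. inverse (Dz z)) \<longlongrightarrow> 0) (at 0)"
            using filterlim_compose[OF tendsto_inverse_0 fD] by simp
          then show "((\<lambda>z. - inverse (Dz z)) \<longlongrightarrow> - 0) (at 0)"
            by (rule tendsto_minus)
          show "eventually (\<lambda>z. Dz z \<noteq> 0) (at 0)"
            by (rule filterlim_at_infinity_imp_eventually_ne[OF fD])
        qed
      qed
    qed
    obtain r2 where r2: "r2 > 0" "\<And>z. z \<noteq> 0 \<Longrightarrow> dist z 0 < r2 \<Longrightarrow> Dz z \<noteq> 0"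
      using evD unfolding eventually_at by auto
    define r where "r = min r0 (min r1 r2)"
    have r: "0 < r" "r \<le> 1" "r \<le> r0" "r \<le> r1" "r \<le> r2" using r0 r1 r2 by (auto simp: r_def)
    have lnr0: "ln r \<le> ln r0" "ln r \<le> ln r1" using r r0 r1 by auto
    define K0 where "K0 = (\<lambda>z. - inverse (Dz z))"
    have hD: "Dz holomorphic_on ball 0 r - {0}"
    proof -
      have "gs holomorphic_on ball 0 r - {0}" by (rule holomorphic_on_subset[OF r1(3)]) (use r in auto)
      moreover have "g holomorphic_on ball 0 r - {0}" by (rule holomorphic_on_subset[OF r0(3)]) (use r in auto)
      ultimately show ?thesis unfolding Dz_def by (intro holomorphic_intros)
    qed
    have hK0: "K0 holomorphic_on ball 0 r - {0}"
      unfolding K0_def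
    proof (intro holomorphic_intros hD)
      fix z assume "z \<in> ball 0 r - {0::complex}"
      then show "Dz z \<noteq> 0" using r2(2)[of z] r by (auto simp: dist_norm)
    qed
    define K where "K = (\<lambda>y. if y = 0 then c else K0 y)"
    have hK: "K holomorphic_on ball 0 r"
      unfolding K_def by (rule removable_singularity[OF hK0 open_ball]) (use c in \<open>simp add: K0_def\<close>)
    show False
    proof (rule lemX[OF ff assms(2) r(1) r(2) _ hK])
      show "gh holomorphic_on ball 0 r" by (rule holomorphic_on_subset[OF hgh]) (use r in auto)
      show "E21 w \<noteq> 0" if "Re w < ln r" for w
      proof -
        have "Re w < ln r0" using that lnr0 by linarith
        then show ?thesis by (rule nz1)
      qed
      show "gh (exp w) = E11 w / E21 w" if w: "Re w < ln r" for w
      proof -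
        have w0: "Re w < ln r0" using w lnr0 by linarith
        have lw: "w \<in> LH" using ltLH[OF r(1) r(2) w] .
        show ?thesis using ghq gq[OF lw nz1[OF w0]] by simp
      qed
    next
      fix w assume w: "Re w < ln r"
      have lw: "w \<in> LH" using ltLH[OF r(1) r(2) w] .
      have w0: "Re w < ln r0" "Re w < ln r1" using w lnr0 by linarith+
      have n1: "E21 w \<noteq> 0" using nz1[OF w0(1)] .
      have n2: "E22 w \<noteq> 0" using nz2[OF w0(2)] .
      have "K (exp w) = - inverse (E12 w / E22 w + - (E11 w / E21 w))"
        unfolding K_def K0_def Dz_def using gq[OF lw n1] gsq[OF lw n2] by simp
      also have "E12 w / E22 w + - (E11 w / E21 w) = - (E11 w * E22 w - E12 w * E21 w) / (E21 w * E22 w)"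
        using n1 n2 by (simp add: field_simps)
      also have "\<dots> = - 1 / (E21 w * E22 w)" using det[OF lw] by simp
      finally show "E21 w * E22 w = K (exp w)" by (simp add: field_simps)
    qed
  qed
  have ev1: "eventually (\<lambda>w. w \<in> LH \<and> E21 w \<noteq> 0 \<and> E22 w \<noteq> 0) end_filter"
    unfolding eventually_end_filter
  proof (intro exI[of _ "min (ln r0) (ln r1)"] allI impI)
    fix w assume w: "Re w < min (ln r0) (ln r1)"
    have w0: "Re w < ln r0" "Re w < ln r1" using w by auto
    show "w \<in> LH \<and> E21 w \<noteq> 0 \<and> E22 w \<noteq> 0"
      using ltLH[OF r0(1) r0(2) w0(1)] nz1[OF w0(1)] nz2[OF w0(2)] by blast
  qed
  have lim2: "((\<lambda>w. E12 w / E22 w) \<longlongrightarrow> a) end_filter"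
  proof -
    have "((\<lambda>w. gs (exp w)) \<longlongrightarrow> a) end_filter"
      using filterlim_compose[OF gsa end_filter_exp] .
    moreover have "eventually (\<lambda>w. gs (exp w) = E12 w / E22 w) end_filter"
      by (rule eventually_mono[OF ev1]) (use gsq in auto)
    ultimately show ?thesis by (rule Lim_transform_eventually)
  qed
  have gv2: "gauss_value_at_0 E12 E22 a"
    unfolding gauss_value_at_0_def using E22ex lim2 by blast
  define s where "s = (\<lambda>w. norm (E11 w / E21 w - a) + norm (E12 w / E22 w - a))"
  have s0: "(s \<longlongrightarrow> 0) end_filter"
  proof -
    have a1: "((\<lambda>w. norm (E11 w / E21 w - a)) \<longlongrightarrow> 0) end_filter"
      using lim1 by (simp add: tendsto_norm_zero_iff Lim_null[symmetric])
    have a2: "((\<lambda>w. norm (E12 w / E22 w - a)) \<longlongrightarrow> 0) end_filter"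
      using lim2 by (simp add: tendsto_norm_zero_iff Lim_null[symmetric])
    show ?thesis using tendsto_add[OF a1 a2] by (simp add: s_def)
  qed
  have f1: "((\<lambda>w. (E11 w * cnj (E21 w) + E12 w * cnj (E22 w)) / complex_of_real (cmod (E21 w) ^ 2 + cmod (E22 w) ^ 2)) \<longlongrightarrow> a) end_filter"
    unfolding Lim_null[of _ a]
  proof (rule Lim_null_comparison[OF _ s0])
    show "eventually (\<lambda>w. norm ((E11 w * cnj (E21 w) + E12 w * cnj (E22 w)) / complex_of_real (cmod (E21 w) ^ 2 + cmod (E22 w) ^ 2) - a) \<le> s w) end_filter"
      by (rule eventually_mono[OF ev1]) (use proj_fst_bound in \<open>auto simp: s_def\<close>)
  qed
  have f2: "((\<lambda>w. 1 / (cmod (E21 w) ^ 2 + cmod (E22 w) ^ 2)) \<longlongrightarrow> 0) end_filter"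
  proof (rule Lim_null_comparison[OF _ s0])
    show "eventually (\<lambda>w. norm (1 / (cmod (E21 w) ^ 2 + cmod (E22 w) ^ 2)) \<le> s w) end_filter"
    proof (rule eventually_mono[OF ev1])
      fix w assume w: "w \<in> LH \<and> E21 w \<noteq> 0 \<and> E22 w \<noteq> 0"
      have "norm (1 / (cmod (E21 w) ^ 2 + cmod (E22 w) ^ 2)) = 1 / (cmod (E21 w) ^ 2 + cmod (E22 w) ^ 2)"
        by simp
      also have "\<dots> \<le> s w" unfolding s_def
        by (rule proj_snd_bound) (use w det in auto)
      finally show "norm (1 / (cmod (E21 w) ^ 2 + cmod (E22 w) ^ 2)) \<le> s w" .
    qed
  qed
  have "((\<lambda>w. proj_uhs (E11 w) (E12 w) (E21 w) (E22 w)) \<longlongrightarrow> (a, 0)) end_filter"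
    unfolding proj_uhs_def by (rule tendsto_Pair[OF f1 f2])
  then show ?thesis using gv2 by blast
qed


end
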